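(* For $m\ge1$, let $\mathbf{B}_m$ be the $m\times m$ symmetric tridiagonal matrix with diagonal entries $b_{kk}=4k^2-6k+3$ ($1\le k\le m$) and off-diagonal entries $b_{k,k+1}=b_{k+1,k}=-k(2k-1)$ ($1\le k\le m-1$), all other entries zero, and let $\mathbf{D}_m=\mathbf{B}_m-\frac12\mathbf{E}_m$ with $\mathbf{E}_m$ the identity matrix. Then for every $m\in\mathbb{N}$, $$\lambda_{\min}(\mathbf{B}_m)=\tfrac12+\lambda_{\min}(\mathbf{D}_m)>\tfrac12,$$ where $\lambda_{\min}$ denotes the smallest eigenvalue. *)

theory Defs
  imports Complex_Main "Jordan_Normal_Form.Char_Poly"
begin

text \<open>The m x m symmetric tridiagonal matrix B_m (indices are 0-based here;
  row/column index i corresponds to k = i + 1 in the paper).\<close>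
definition B_mat :: "nat \<Rightarrow> real mat" where
  "B_mat m = mat m m (\<lambda>(i, j).
      if i = j then 4 * (real i + 1)^2 - 6 * (real i + 1) + 3
      else if j = i + 1 then - ((real i + 1) * (2 * (real i + 1) - 1))
      else if i = j + 1 then - ((real j + 1) * (2 * (real j + 1) - 1))
      else 0)"

definition D_mat :: "nat \<Rightarrow> real mat" where
  "D_mat m = B_mat m - (1/2) \<cdot>\<^sub>m 1\<^sub>m m"

definition lambda_min :: "real mat \<Rightarrow> real" where
  "lambda_min A = Min {k. eigenvalue A k}"

end

theory Submission imports Defs begin

lemma mult_mat_vec_sum:
  assumes "A \<in> carrier_mat n n" "v \<in> carrier_vec n" "i < n"
  shows "(A *\<^sub>v v) $ i = (\<Sum>j<n. A $$ (i,j) * v $ j)"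
  using assms by (auto simp: scalar_prod_def atLeast0LessThan intro!: sum.cong)

lemma sym_real_eigenvalue_exists:
  fixes A :: "real mat"
  assumes A: "A \<in> carrier_mat n n" and n: "n \<ge> 1"
    and sym: "\<And>i j. i < n \<Longrightarrow> j < n \<Longrightarrow> A $$ (i,j) = A $$ (j,i)"
  shows "\<exists>k. eigenvalue A k"
proof -
  let ?C = "map_mat complex_of_real A"
  have C: "?C \<in> carrier_mat n n" using A by auto
  have deg: "degree (char_poly ?C) = n" using degree_monic_char_poly[OF C] by auto
  then have "\<not> constant (poly (char_poly ?C))" unfolding constant_degree using n by simp
  then obtain c where "poly (char_poly ?C) c = 0"
    using fundamental_theorem_of_algebra by blast
  then have "eigenvalue ?C c" using eigenvalue_root_char_poly[OF C] by simp
  then obtain v where v: "v \<in> carrier_vec n" "v \<noteq> 0\<^sub>v n" "?C *\<^sub>v v = c \<cdot>\<^sub>v v"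
    unfolding eigenvalue_def eigenvector_def using C by auto
  have eq: "(\<Sum>j<n. of_real (A$$(i,j)) * v$j) = c * v$i" if i: "i < n" for i
  proof -
    have "(?C *\<^sub>v v) $ i = (c \<cdot>\<^sub>v v) $ i" using v(3) by simp
    then show ?thesis using mult_mat_vec_sum[OF C v(1) i] A i v(1) by auto
  qed
  define q where "q = (\<Sum>i<n. cnj (v$i) * (\<Sum>j<n. of_real (A$$(i,j)) * v$j))"
  have q1: "q = c * (\<Sum>i<n. cnj (v$i) * v$i)"
    using eq by (simp add: q_def sum_distrib_left mult_ac)
  have "cnj q = (\<Sum>i<n. \<Sum>j<n. v$i * of_real (A$$(i,j)) * cnj (v$j))"
    by (simp add: q_def sum_distrib_left mult_ac)
  also have "\<dots> = (\<Sum>j<n. \<Sum>i<n. v$i * of_real (A$$(i,j)) * cnj (v$j))"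
    by (rule sum.swap)
  also have "\<dots> = q"
    unfolding q_def sum_distrib_left
    by (intro sum.cong refl, simp add: sym mult_ac)
  finally have q2: "cnj q = q" .
  define s where "s = (\<Sum>i<n. (cmod (v$i))^2)"
  have s: "(\<Sum>i<n. cnj (v$i) * v$i) = of_real s"
    unfolding s_def of_real_sum
    by (intro sum.cong refl, simp add: complex_norm_square mult.commute del: of_real_power)
  obtain i where i: "i < n" "v $ i \<noteq> 0" using v(1,2) by force
  have "s > 0" unfolding s_def
    by (rule sum_pos2[of _ i]) (use i in auto)
  then have c: "c = q / of_real s" using q1 s by (simp add: field_simps)
  then have "cnj c = c" using q2 by simp
  then have "Im c = 0" by (metis Reals_cnj_iff complex_is_Real_iff)
  then have cr: "c = of_real (Re c)" by (simp add: complex_eq_iff)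
  have "poly (char_poly ?C) (of_real (Re c)) = 0" using \<open>poly (char_poly ?C) c = 0\<close> cr by simp
  then have "of_real (poly (char_poly A) (Re c)) = (0::complex)"
    by (simp add: of_real_hom.char_poly_hom[OF A] of_real_hom.poly_map_poly)
  then have "poly (char_poly A) (Re c) = 0" by simp
  then show ?thesis using eigenvalue_root_char_poly[OF A] by blast
qed

definition bent :: "nat \<Rightarrow> nat \<Rightarrow> real" where
  "bent i j = (if i = j then 4 * (real i + 1)^2 - 6 * (real i + 1) + 3
      else if j = i + 1 then - ((real i + 1) * (2 * (real i + 1) - 1))
      else if i = j + 1 then - ((real j + 1) * (2 * (real j + 1) - 1))
      else 0)"

lemma B_mat_carrier: "B_mat m \<in> carrier_mat m m"
  by (simp add: B_mat_def)

lemma B_mat_index: "i < m \<Longrightarrow> j < m \<Longrightarrow> B_mat m $$ (i,j) = bent i j"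
  by (simp add: B_mat_def bent_def)

lemma bent_col_sum:
  "(\<Sum>i<Suc k. bent i (Suc k) * x i) = - ((real k + 1) * (2 * real k + 1)) * x k"
proof -
  have "(\<Sum>i<Suc k. bent i (Suc k) * x i) = (\<Sum>i<Suc k. if i = k then - ((real k + 1) * (2 * real k + 1)) * x k else 0)"
    by (intro sum.cong refl) (auto simp: bent_def algebra_simps)
  also have "\<dots> = - ((real k + 1) * (2 * real k + 1)) * x k" by simp
  finally show ?thesis .
qed

lemma bent_row_sum:
  "(\<Sum>j<Suc k. bent (Suc k) j * x j) = - ((real k + 1) * (2 * real k + 1)) * x k"
proof -
  have "(\<Sum>j<Suc k. bent (Suc k) j * x j) = (\<Sum>j<Suc k. if j = k then - ((real k + 1) * (2 * real k + 1)) * x k else 0)"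
    by (intro sum.cong refl) (auto simp: bent_def algebra_simps)
  also have "\<dots> = - ((real k + 1) * (2 * real k + 1)) * x k" by simp
  finally show ?thesis .
qed

lemma qf_identity:
  "(\<Sum>i<Suc k. \<Sum>j<Suc k. bent i j * x i * x j) =
     (\<Sum>i<Suc k. (x i)^2) / 2 + (\<Sum>i<k. ((2 * real i + 1) * x i - (2 * real i + 2) * x (Suc i))^2) / 2
     + (2 * real k + 1)^2 * (x k)^2 / 2"
proof (induction k)
  case 0
  then show ?case by (simp add: bent_def power2_eq_square)
next
  case (Suc k)
  let ?f = "\<lambda>i j. bent i j * x i * x j"
  have split: "(\<Sum>i<Suc (Suc k). \<Sum>j<Suc (Suc k). ?f i j) =
    (\<Sum>i<Suc k. \<Sum>j<Suc k. ?f i j) + (\<Sum>i<Suc k. ?f i (Suc k)) + (\<Sum>j<Suc k. ?f (Suc k) j) + ?f (Suc k) (Suc k)"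
    by (simp add: sum.distrib algebra_simps)
  have c1: "(\<Sum>i<Suc k. ?f i (Suc k)) = - ((real k + 1) * (2 * real k + 1)) * x k * x (Suc k)"
  proof -
    have "(\<Sum>i<Suc k. ?f i (Suc k)) = x (Suc k) * (\<Sum>i<Suc k. bent i (Suc k) * x i)"
      unfolding sum_distrib_left by (simp add: mult_ac)
    then show ?thesis using bent_col_sum[where k=k and x=x] by simp
  qed
  have c2: "(\<Sum>j<Suc k. ?f (Suc k) j) = - ((real k + 1) * (2 * real k + 1)) * x k * x (Suc k)"
  proof -
    have "(\<Sum>j<Suc k. ?f (Suc k) j) = x (Suc k) * (\<Sum>j<Suc k. bent (Suc k) j * x j)"
      unfolding sum_distrib_left by (simp add: mult_ac)
    then show ?thesis using bent_row_sum[where k=k and x=x] by simp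
  qed
  have c3: "bent (Suc k) (Suc k) = 4 * (real k)^2 + 10 * real k + 7"
    by (simp add: bent_def power2_eq_square algebra_simps)
  define X where "X = (\<Sum>i<Suc k. (x i)^2)"
  define G where "G = (\<Sum>i<k. ((2 * real i + 1) * x i - (2 * real i + 2) * x (Suc i))^2)"
  have e1: "(\<Sum>i<Suc (Suc k). (x i)^2) = X + (x (Suc k))^2" unfolding X_def by simp
  have e2: "(\<Sum>i<Suc k. ((2 * real i + 1) * x i - (2 * real i + 2) * x (Suc i))^2) =
     G + ((2 * real k + 1) * x k - (2 * real k + 2) * x (Suc k))^2" unfolding G_def by simp
  have IH: "(\<Sum>i<Suc k. \<Sum>j<Suc k. ?f i j) = X / 2 + G / 2 + (2 * real k + 1)^2 * (x k)^2 / 2"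
    using Suc.IH unfolding X_def G_def .
  show ?case unfolding split c1 c2 IH e1 e2 c3
    by (simp add: power2_eq_square field_simps)
qed

lemma extra_pos:
  fixes x :: "nat \<Rightarrow> real"
  assumes "i \<le> k" "x i \<noteq> 0"
  shows "(\<Sum>i<k. ((2 * real i + 1) * x i - (2 * real i + 2) * x (Suc i))^2) + (2 * real k + 1)^2 * (x k)^2 > 0"
proof (rule ccontr)
  let ?g = "\<lambda>i. ((2 * real i + 1) * x i - (2 * real i + 2) * x (Suc i))^2"
  assume "\<not> ?thesis"
  moreover have "(\<Sum>i<k. ?g i) \<ge> 0" by (intro sum_nonneg) auto
  moreover have "(2 * real k + 1)^2 * (x k)^2 \<ge> 0" by simp
  ultimately have s0: "(\<Sum>i<k. ?g i) = 0" and l0: "(2 * real k + 1)^2 * (x k)^2 = 0" by linarith+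
  have g0: "?g i = 0" if "i < k" for i
    using s0 sum_nonneg_eq_0_iff[of "{..<k}" ?g] that by auto
  have xk: "x k = 0" using l0 by simp
  have "x (k - t) = 0" if "t \<le> k" for t
    using that
  proof (induction t)
    case 0 then show ?case using xk by simp
  next
    case (Suc t)
    let ?i = "k - Suc t"
    have i: "?i < k" "Suc ?i = k - t" using Suc.prems by auto
    have "x (Suc ?i) = 0" using i(2) Suc by simp
    then have "((2 * real ?i + 1) * x ?i)^2 = 0" using g0[OF i(1)] by simp
    then show ?case by simp
  qed
  from this[of "k - i"] assms show False by simp
qed

lemma B_eig_gt:
  assumes "eigenvalue (B_mat m) r"
  shows "r > 1/2"
proof -
  from assms obtain v where v: "v \<in> carrier_vec m" "v \<noteq> 0\<^sub>v m" "B_mat m *\<^sub>v v = r \<cdot>\<^sub>v v"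
    unfolding eigenvalue_def eigenvector_def by (auto simp: B_mat_def)
  obtain i where i: "i < m" "v $ i \<noteq> 0" using v(1,2) by force
  then obtain k where mk: "m = Suc k" by (cases m) auto
  define x where "x = (\<lambda>i. v $ i)"
  have eq: "(\<Sum>j<m. bent i j * x j) = r * x i" if i: "i < m" for i
  proof -
    have "(B_mat m *\<^sub>v v) $ i = (r \<cdot>\<^sub>v v) $ i" using v(3) by simp
    then show ?thesis using mult_mat_vec_sum[OF B_mat_carrier v(1) i] B_mat_index i v(1)
      by (auto simp: x_def)
  qed
  have "(\<Sum>i<m. \<Sum>j<m. bent i j * x i * x j) = (\<Sum>i<m. x i * (\<Sum>j<m. bent i j * x j))"
    by (simp add: sum_distrib_left mult_ac)
  also have "\<dots> = r * (\<Sum>i<m. (x i)^2)"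
    using eq by (simp add: sum_distrib_left power2_eq_square mult_ac)
  finally have rX: "r * (\<Sum>i<m. (x i)^2) = (\<Sum>i<m. (x i)^2) / 2 + ((\<Sum>i<k. ((2 * real i + 1) * x i - (2 * real i + 2) * x (Suc i))^2)
     + (2 * real k + 1)^2 * (x k)^2) / 2"
    using qf_identity[where k=k and x=x] mk by simp
  moreover have E: "((\<Sum>i<k. ((2 * real i + 1) * x i - (2 * real i + 2) * x (Suc i))^2)
     + (2 * real k + 1)^2 * (x k)^2) > 0"
    using extra_pos[where x=x and i=i and k=k] i mk by (simp add: x_def)
  moreover have X: "(\<Sum>i<m. (x i)^2) > 0"
    by (rule sum_pos2[of _ i]) (use i in \<open>auto simp: x_def\<close>)
  ultimately have "(r - 1/2) * (\<Sum>i<m. (x i)^2) > 0"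
    by (simp add: algebra_simps)
  then have "r - 1/2 > 0" using X by (simp add: zero_less_mult_iff)
  then show ?thesis by simp
qed


lemma D_mat_carrier: "D_mat m \<in> carrier_mat m m"
  unfolding D_mat_def by (rule minus_carrier_mat) simp

lemma D_mult: assumes v: "v \<in> carrier_vec m" and i: "i < m"
  shows "(D_mat m *\<^sub>v v) $ i = (B_mat m *\<^sub>v v) $ i - 1/2 * v $ i"
proof -
  have "D_mat m *\<^sub>v v = B_mat m *\<^sub>v v - ((1/2) \<cdot>\<^sub>m 1\<^sub>m m) *\<^sub>v v"
    unfolding D_mat_def by (rule minus_mult_distrib_mat_vec[OF B_mat_carrier _ v]) simp
  moreover have "(((1/2) \<cdot>\<^sub>m 1\<^sub>m m) *\<^sub>v v) $ i = 1/2 * v $ i"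
    using mult_mat_vec_sum[of "(1/2) \<cdot>\<^sub>m 1\<^sub>m m" m v i] v i
    by (simp add: if_distrib cong: if_cong)
  ultimately show ?thesis using v i B_mat_carrier[of m] by simp
qed

lemma vec_eq_smult_iff:
  assumes "A \<in> carrier_mat m m" "v \<in> carrier_vec m"
  shows "A *\<^sub>v v = r \<cdot>\<^sub>v v \<longleftrightarrow> (\<forall>i<m. (A *\<^sub>v v) $ i = r * v $ i)"
  using assms by (auto simp: vec_eq_iff)

lemma eig_shift: "eigenvalue (D_mat m) k \<longleftrightarrow> eigenvalue (B_mat m) (k + 1/2)"
proof -
  have "eigenvector (D_mat m) v k \<longleftrightarrow> eigenvector (B_mat m) v (k + 1/2)" for v
  proof (cases "v \<in> carrier_vec m")
    case True
    have "D_mat m *\<^sub>v v = k \<cdot>\<^sub>v v \<longleftrightarrow> B_mat m *\<^sub>v v = (k + 1/2) \<cdot>\<^sub>v v"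
      unfolding vec_eq_smult_iff[OF D_mat_carrier True] vec_eq_smult_iff[OF B_mat_carrier True]
      using D_mult[OF True] by (auto simp: algebra_simps)
    then show ?thesis unfolding eigenvector_def using D_mat_carrier[of m] B_mat_carrier[of m] by auto
  next
    case False
    then show ?thesis unfolding eigenvector_def using D_mat_carrier[of m] B_mat_carrier[of m] by auto
  qed
  then show ?thesis unfolding eigenvalue_def by auto
qed

lemma eig_finite:
  assumes "A \<in> carrier_mat m m"
  shows "finite {k :: real. eigenvalue A k}"
proof -
  have "char_poly A \<noteq> 0" using degree_monic_char_poly[OF assms] by auto
  then have "finite {k. poly (char_poly A) k = 0}" by (rule poly_roots_finite)
  then show ?thesis using eigenvalue_root_char_poly[OF assms] by simp
qed

theorem corollary4p2:
  fixes m :: nat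
  assumes "m \<ge> 1"
  shows "lambda_min (B_mat m) = 1/2 + lambda_min (D_mat m) \<and> 1/2 < lambda_min (B_mat m)"
proof -
  let ?SB = "{k. eigenvalue (B_mat m) k}"
  let ?SD = "{k. eigenvalue (D_mat m) k}"
  have img: "?SB = (\<lambda>k. k + 1/2) ` ?SD"
  proof -
    have "r \<in> (\<lambda>k. k + 1/2) ` ?SD" if "r \<in> ?SB" for r
    proof -
      have "r - 1/2 \<in> ?SD" using that eig_shift[of m "r - 1/2"] by simp
      then show ?thesis by (intro image_eqI[of _ _ "r - 1/2"]) auto
    qed
    moreover have "(\<lambda>k. k + 1/2) ` ?SD \<subseteq> ?SB" by (auto simp: eig_shift)
    ultimately show ?thesis by blast
  qed
  have fD: "finite ?SD" by (rule eig_finite[OF D_mat_carrier])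
  have fB: "finite ?SB" by (rule eig_finite[OF B_mat_carrier])
  have "\<exists>k. eigenvalue (B_mat m) k"
    by (rule sym_real_eigenvalue_exists[OF B_mat_carrier assms])
       (simp add: B_mat_index bent_def)
  then have neB: "?SB \<noteq> {}" by auto
  then have neD: "?SD \<noteq> {}" using img by auto
  have mono: "mono (\<lambda>k::real. k + 1/2)" by (auto simp: mono_def)
  have "lambda_min (B_mat m) = Min ((\<lambda>k. k + 1/2) ` ?SD)"
    unfolding lambda_min_def img ..
  also have "\<dots> = Min ?SD + 1/2"
    using mono_Min_commute[OF mono fD neD] by simp
  finally have e: "lambda_min (B_mat m) = 1/2 + lambda_min (D_mat m)"
    unfolding lambda_min_def by simp
  have "Min ?SB \<in> ?SB" using Min_in[OF fB neB] .
  then have "1/2 < lambda_min (B_mat m)" unfolding lambda_min_def using B_eig_gt by auto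
  with e show ?thesis by simp
qed

end
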